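(* Consider a run of \texttt{SequOOL} with budget $n$ on $f$ with deterministic feedback, and let $h_{\max}=\lfloor n/\bar\log n\rfloor$. Let $x^\star$ be a global optimum of $f$ with associated $(\nu,\rho)$, let $C>1$, and write $d=d(\nu,C,\rho)$. For any depth $h\in[h_{\max}]$, if \[ \frac{h_{\max}}{h}\ \ge\ C\rho^{-d h}, \] then $\bot_h=h$, with the convention $\bot_0=0$.
   Context: Let $\mathcal X$ be a set and $f:\mathcal X\to\mathbb R$ a function attaining its supremum; a point $x^\star$ with $f(x^\star)=\sup_{x\in\mathcal X}f(x)$ is a global optimum. Hierarchical partitioning $\mathcal P=\{\mathcal P_{h,i}\}$: - for every depth $h\ge 0$, the cells $\{\mathcal P_{h,i}\}_{1\le i\le I_h}$ form a partition of $\mathcal X$, and $\mathcal P_{0,1}=\mathcal X$; - each cell $\mathcal P_{h,i}$ is partitioned into finitely many children cells of depth $h+1$; - each cell has a fixed representative point $x_{h,i}\in\mathcal P_{h,i}$, and we write $f_{h,i}=f(x_{h,i})$; - for a global optimum $x^\star$, $i^\star_h$ is the index of the unique depth-$h$ cell containing $x^\star$. Local smoothness: a global optimum $x^\star$ has associated $(\nu,\rho)$, with $\nu>0$ and $\rho\in(0,1)$, if for all $h\in\mathbb N$ and all $x\in\mathcal P_{h,i^\star_h}$ we have $f(x)\ge f(x^\star)-\nu\rho^h$. Near-optimality dimension: for $\nu>0$, $C>1$, $\rho\in(0,1)$, let $\mathcal N_h(\epsilon)$ be the number of depth-$h$ cells $\mathcal P_{h,i}$ with $\sup_{x\in\mathcal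 P_{h,i}}f(x)\ge f(x^\star)-\epsilon$. Define \[ d(\nu,C,\rho)=\inf\{d'\ge 0:\ \forall h\ge 0,\ \mathcal N_h(3\nu\rho^h)\le C\rho^{-d'h}\}, \] which is assumed finite. Notation: $\bar\log n=\sum_{t=1}^n 1/t$ (the $n$-th harmonic number), and $[a]=\{1,\dots,a\}$. Deterministic feedback: evaluating a cell $\mathcal P_{h,i}$ returns $f_{h,i}$ exactly. Opening a cell means evaluating each of its children cells once. \texttt{SequOOL} with budget $n$: set $h_{\max}=\lfloor n/\bar\log n\rfloor$ and open $\mathcal P_{0,1}$. Then, for $h=1,2,\dots,h_{\max}$ in increasing order, open the $\lfloor h_{\max}/h\rfloor$ depth-$h$ cells having the largest values $f_{h,j}$ among the evaluated depth-$h$ cells (or all of them if there are fewer). Finally, output $x(n)$, a representative point $x_{h,i}$ of an evaluated cell maximizing $f_{h,i}$. $\bot_h$ is the depth of the deepest opened cell containing $x^\star$ at the end of iteration $h$ of the loop. *)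

theory Defs
  imports "HOL-Analysis.Analysis"
begin

text \<open>Hierarchical partitioning: depth h has cells P h i, i in {1..I h};
  x h i is the representative point of cell (h,i).\<close>
definition hier_partition ::
  "(nat \<Rightarrow> nat) \<Rightarrow> (nat \<Rightarrow> nat \<Rightarrow> 'a set) \<Rightarrow> (nat \<Rightarrow> nat \<Rightarrow> 'a) \<Rightarrow> bool" where
  "hier_partition I P x \<longleftrightarrow>
     I 0 = 1 \<and> P 0 1 = UNIV \<and>
     (\<forall>h. (\<Union>i\<in>{1..I h}. P h i) = UNIV) \<and>
     (\<forall>h. \<forall>i\<in>{1..I h}. \<forall>j\<in>{1..I h}. i \<noteq> j \<longrightarrow> P h i \<inter> P h j = {}) \<and>
     (\<forall>h. \<forall>i\<in>{1..I h}. P h i \<noteq> {}) \<and>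
     (\<forall>h. \<forall>j\<in>{1..I (Suc h)}. \<exists>i\<in>{1..I h}. P (Suc h) j \<subseteq> P h i) \<and>
     (\<forall>h. \<forall>i\<in>{1..I h}.
        P h i = (\<Union>j\<in>{j\<in>{1..I (Suc h)}. P (Suc h) j \<subseteq> P h i}. P (Suc h) j)) \<and>
     (\<forall>h. \<forall>i\<in>{1..I h}. x h i \<in> P h i)"

definition children :: "(nat \<Rightarrow> nat) \<Rightarrow> (nat \<Rightarrow> nat \<Rightarrow> 'a set) \<Rightarrow> nat \<Rightarrow> nat \<Rightarrow> nat set" where
  "children I P h i = {j\<in>{1..I (Suc h)}. P (Suc h) j \<subseteq> P h i}"

definition evaluated :: "(nat \<Rightarrow> nat) \<Rightarrow> (nat \<Rightarrow> nat \<Rightarrow> 'a set) \<Rightarrow> (nat \<Rightarrow> nat set) \<Rightarrow> nat \<Rightarrow> nat set" where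
  "evaluated I P opened h =
     (if h = 0 then {1} else (\<Union>i\<in>opened (h - 1). children I P (h - 1) i))"

definition sequool_hmax :: "nat \<Rightarrow> nat" where
  "sequool_hmax n = nat \<lfloor>real n / (harm n :: real)\<rfloor>"

text \<open>opened h = set of indices of depth-h cells opened by a run of SequOOL with budget n
  (any tie-breaking among equal values is allowed).\<close>
definition sequool_run ::
  "('a \<Rightarrow> real) \<Rightarrow> (nat \<Rightarrow> nat) \<Rightarrow> (nat \<Rightarrow> nat \<Rightarrow> 'a set) \<Rightarrow> (nat \<Rightarrow> nat \<Rightarrow> 'a) \<Rightarrow> nat
     \<Rightarrow> (nat \<Rightarrow> nat set) \<Rightarrow> bool" where
  "sequool_run f I P x n opened \<longleftrightarrow>
     opened 0 = {1} \<and>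
     (\<forall>h\<in>{1..sequool_hmax n}.
        opened h \<subseteq> evaluated I P opened h \<and>
        card (opened h) = min (sequool_hmax n div h) (card (evaluated I P opened h)) \<and>
        (\<forall>i\<in>opened h. \<forall>j\<in>evaluated I P opened h - opened h. f (x h j) \<le> f (x h i))) \<and>
     (\<forall>h>sequool_hmax n. opened h = {})"

definition bot_depth :: "(nat \<Rightarrow> nat \<Rightarrow> 'a set) \<Rightarrow> (nat \<Rightarrow> nat set) \<Rightarrow> 'a \<Rightarrow> nat \<Rightarrow> nat" where
  "bot_depth P opened xstar h = Max {h'. h' \<le> h \<and> (\<exists>i\<in>opened h'. xstar \<in> P h' i)}"

definition local_smooth ::
  "('a \<Rightarrow> real) \<Rightarrow> (nat \<Rightarrow> nat) \<Rightarrow> (nat \<Rightarrow> nat \<Rightarrow> 'a set) \<Rightarrow> 'a \<Rightarrow> real \<Rightarrow> real \<Rightarrow> bool" where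
  "local_smooth f I P xstar \<nu> \<rho> \<longleftrightarrow>
     (\<forall>h. \<forall>i\<in>{1..I h}. xstar \<in> P h i \<longrightarrow> (\<forall>y\<in>P h i. f y \<ge> f xstar - \<nu> * \<rho> ^ h))"

definition N_cells ::
  "('a \<Rightarrow> real) \<Rightarrow> (nat \<Rightarrow> nat) \<Rightarrow> (nat \<Rightarrow> nat \<Rightarrow> 'a set) \<Rightarrow> 'a \<Rightarrow> nat \<Rightarrow> real \<Rightarrow> nat" where
  "N_cells f I P xstar h \<epsilon> = card {i\<in>{1..I h}. (SUP y\<in>P h i. f y) \<ge> f xstar - \<epsilon>}"

definition near_opt_set ::
  "('a \<Rightarrow> real) \<Rightarrow> (nat \<Rightarrow> nat) \<Rightarrow> (nat \<Rightarrow> nat \<Rightarrow> 'a set) \<Rightarrow> 'a \<Rightarrow> real \<Rightarrow> real \<Rightarrow> real \<Rightarrow> real set" where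
  "near_opt_set f I P xstar \<nu> C \<rho> =
     {d'. d' \<ge> 0 \<and> (\<forall>h. real (N_cells f I P xstar h (3 * \<nu> * \<rho> ^ h)) \<le> C * \<rho> powr (- d' * real h))}"

definition near_opt_dim ::
  "('a \<Rightarrow> real) \<Rightarrow> (nat \<Rightarrow> nat) \<Rightarrow> (nat \<Rightarrow> nat \<Rightarrow> 'a set) \<Rightarrow> 'a \<Rightarrow> real \<Rightarrow> real \<Rightarrow> real \<Rightarrow> real" where
  "near_opt_dim f I P xstar \<nu> C \<rho> = Inf (near_opt_set f I P xstar \<nu> C \<rho>)"

end

theory Submission
  imports Defs
begin

lemma dim_ok:
  assumes ne: "near_opt_set f I P xstar \<nu> C \<rho> \<noteq> {}" and rho: "0 < \<rho>"
  shows "near_opt_dim f I P xstar \<nu> C \<rho> \<ge> 0"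
    and "\<And>h. real (N_cells f I P xstar h (3 * \<nu> * \<rho> ^ h))
             \<le> C * \<rho> powr (- near_opt_dim f I P xstar \<nu> C \<rho> * real h)"
proof -
  let ?S = "near_opt_set f I P xstar \<nu> C \<rho>"
  have bb: "bdd_below ?S" unfolding near_opt_set_def by (rule bdd_belowI[of _ 0]) auto
  show "near_opt_dim f I P xstar \<nu> C \<rho> \<ge> 0"
    unfolding near_opt_dim_def using ne
    by (intro cInf_greatest) (auto simp: near_opt_set_def)
  fix h
  let ?T = "{d'::real. real (N_cells f I P xstar h (3 * \<nu> * \<rho> ^ h)) \<le> C * \<rho> powr (- d' * real h)}"
  have cl: "closed ?T"
    by (intro closed_Collect_le continuous_intros) (use rho in auto)
  have "?S \<subseteq> ?T" unfolding near_opt_set_def by auto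
  then have "Inf ?S \<in> ?T" using closed_subset_contains_Inf[OF cl _ ne bb] by blast
  then show "real (N_cells f I P xstar h (3 * \<nu> * \<rho> ^ h))
             \<le> C * \<rho> powr (- near_opt_dim f I P xstar \<nu> C \<rho> * real h)"
    unfolding near_opt_dim_def by simp
qed

theorem lemma1:
  fixes f :: "'a \<Rightarrow> real" and I :: "nat \<Rightarrow> nat" and P :: "nat \<Rightarrow> nat \<Rightarrow> 'a set"
    and x :: "nat \<Rightarrow> nat \<Rightarrow> 'a" and n :: nat and opened :: "nat \<Rightarrow> nat set"
    and xstar :: 'a and \<nu> \<rho> C :: real and h :: nat
  assumes "hier_partition I P x"
    and "\<forall>y. f y \<le> f xstar"
    and "\<nu> > 0" and "0 < \<rho>" and "\<rho> < 1"
    and "local_smooth f I P xstar \<nu> \<rho>"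
    and "C > 1"
    and "near_opt_set f I P xstar \<nu> C \<rho> \<noteq> {}"
    and "sequool_run f I P x n opened"
    and "h \<in> {1..sequool_hmax n}"
    and "real (sequool_hmax n) / real h \<ge> C * \<rho> powr (- near_opt_dim f I P xstar \<nu> C \<rho> * real h)"
  shows "bot_depth P opened xstar h = h"
proof -
  have hp0: "I 0 = 1" and P01: "P 0 1 = UNIV"
    and cover: "\<And>k. (\<Union>i\<in>{1..I k}. P k i) = UNIV"
    and disj: "\<And>k i j. i\<in>{1..I k} \<Longrightarrow> j\<in>{1..I k} \<Longrightarrow> i \<noteq> j \<Longrightarrow> P k i \<inter> P k j = {}"
    and par: "\<And>k j. j\<in>{1..I (Suc k)} \<Longrightarrow> \<exists>i\<in>{1..I k}. P (Suc k) j \<subseteq> P k i"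
    and rep: "\<And>k i. i\<in>{1..I k} \<Longrightarrow> x k i \<in> P k i"
    using assms(1) unfolding hier_partition_def by blast+
  note run = assms(9)[unfolded sequool_run_def]
  define d where "d = near_opt_dim f I P xstar \<nu> C \<rho>"
  define H where "H = sequool_hmax n"
  have d0: "d \<ge> 0" and Nb: "\<And>k. real (N_cells f I P xstar k (3 * \<nu> * \<rho> ^ k)) \<le> C * \<rho> powr (- d * real k)"
    using dim_ok[OF assms(8) assms(4)] unfolding d_def by auto
  have hH: "1 \<le> h" "h \<le> H" using assms(10) H_def by auto
  have ev_sub: "evaluated I P opened k \<subseteq> {1..I k}" for k
    using hp0 by (auto simp: evaluated_def children_def)
  have op_sub: "opened k \<subseteq> {1..I k}" for k
  proof (cases "k = 0")
    case True then show ?thesis using run hp0 by auto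
  next
    case False
    show ?thesis
    proof (cases "k \<le> H")
      case True
      then have "opened k \<subseteq> evaluated I P opened k" using run False H_def by auto
      then show ?thesis using ev_sub by blast
    next
      case False then show ?thesis using run H_def by auto
    qed
  qed
  have main: "k \<le> h \<Longrightarrow> \<exists>i\<in>opened k. xstar \<in> P k i" for k
  proof (induction k)
    case 0 then show ?case using run P01 by auto
  next
    case (Suc k)
    let ?k = "Suc k"
    from Suc obtain i0 where i0: "i0 \<in> opened k" "xstar \<in> P k i0" by auto
    have i0r: "i0 \<in> {1..I k}" using i0 op_sub by blast
    have "xstar \<in> (\<Union>i\<in>{1..I ?k}. P ?k i)" using cover[of ?k] by blast
    then obtain ist where ist: "ist \<in> {1..I ?k}" "xstar \<in> P ?k ist" by blast
    obtain i' where i': "i' \<in> {1..I k}" "P ?k ist \<subseteq> P k i'" using par[OF ist(1)] by blast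
    have "i' = i0"
    proof (rule ccontr)
      assume "i' \<noteq> i0"
      then have "P k i' \<inter> P k i0 = {}" using disj i'(1) i0r by blast
      then show False using i' ist i0 by blast
    qed
    then have istev: "ist \<in> evaluated I P opened ?k"
      using ist i' i0 by (auto simp: evaluated_def children_def)
    have kH: "?k \<in> {1..H}" using Suc.prems hH by auto
    have opev: "opened ?k \<subseteq> evaluated I P opened ?k"
      and cd: "card (opened ?k) = min (H div ?k) (card (evaluated I P opened ?k))"
      and ge: "\<forall>i\<in>opened ?k. \<forall>j\<in>evaluated I P opened ?k - opened ?k. f (x ?k j) \<le> f (x ?k i)"
      using run kH H_def by auto
    show ?case
    proof (rule ccontr)
      assume nope: "\<not> (\<exists>i\<in>opened ?k. xstar \<in> P ?k i)"
      then have istn: "ist \<notin> opened ?k" using ist by blast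
      have fin_ev: "finite (evaluated I P opened ?k)"
        using ev_sub finite_subset by blast
      have fin_op: "finite (opened ?k)" using fin_ev opev finite_subset by blast
      have cd2: "card (opened ?k) = H div ?k"
      proof (rule ccontr)
        assume "card (opened ?k) \<noteq> H div ?k"
        then have "card (opened ?k) = card (evaluated I P opened ?k)" using cd by linarith
        then have "opened ?k = evaluated I P opened ?k"
          using card_subset_eq[OF fin_ev opev] by simp
        then show False using istn istev by blast
      qed
      have fxs: "f (x ?k ist) \<ge> f xstar - \<nu> * \<rho> ^ ?k"
        using assms(6) ist rep[OF ist(1)] unfolding local_smooth_def by blast
      have cellsup: "(SUP y\<in>P ?k i. f y) \<ge> f xstar - 3 * \<nu> * \<rho> ^ ?k"
        if "i \<in> {1..I ?k}" "f (x ?k i) \<ge> f xstar - \<nu> * \<rho> ^ ?k" for i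
      proof -
        have xin: "x ?k i \<in> P ?k i" using rep that(1) by blast
        have "bdd_above (f ` P ?k i)" using assms(2) by (auto intro: bdd_aboveI)
        then have "f (x ?k i) \<le> (SUP y\<in>P ?k i. f y)" using xin by (rule cSUP_upper2) simp
        moreover have "\<nu> * \<rho> ^ ?k \<le> 3 * \<nu> * \<rho> ^ ?k" using assms(3,4) by simp
        ultimately show ?thesis using that(2) by linarith
      qed
      let ?A = "{i\<in>{1..I ?k}. (SUP y\<in>P ?k i. f y) \<ge> f xstar - 3 * \<nu> * \<rho> ^ ?k}"
      have sub: "insert ist (opened ?k) \<subseteq> ?A"
      proof
        fix i assume "i \<in> insert ist (opened ?k)"
        then show "i \<in> ?A"
        proof
          assume "i = ist" then show ?thesis using cellsup ist fxs by auto
        next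
          assume io: "i \<in> opened ?k"
          have "f (x ?k ist) \<le> f (x ?k i)" using ge io istev istn by blast
          then show ?thesis using cellsup[of i] io op_sub[of ?k] fxs by auto
        qed
      qed
      have "card (insert ist (opened ?k)) \<le> card ?A"
        by (rule card_mono[OF _ sub]) simp
      then have c1: "H div ?k + 1 \<le> N_cells f I P xstar ?k (3 * \<nu> * \<rho> ^ ?k)"
        using fin_op istn cd2 unfolding N_cells_def by simp
      have "real H / real ?k < real (H div ?k + 1)"
      proof -
        have "H < (H div ?k + 1) * ?k"
        proof -
          have r: "H mod ?k < ?k" by simp
          have e: "H div ?k * ?k + H mod ?k = H" by (rule div_mult_mod_eq)
          have "(H div ?k + 1) * ?k = H div ?k * ?k + ?k" by (simp add: algebra_simps)
          then show ?thesis using r e by linarith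
        qed
        then have "real H < real (H div ?k + 1) * real ?k" by (metis of_nat_less_iff of_nat_mult)
        then show ?thesis by (simp add: divide_less_eq)
      qed
      also have "\<dots> \<le> C * \<rho> powr (- d * real ?k)" using c1 Nb[of ?k] by linarith
      also have "\<dots> \<le> C * \<rho> powr (- d * real h)"
      proof -
        have "- d * real h \<le> - d * real ?k" using d0 Suc.prems by (simp add: mult_left_mono)
        then have "\<rho> powr (- d * real ?k) \<le> \<rho> powr (- d * real h)"
          using powr_mono'[of "- d * real h" "- d * real ?k" \<rho>] assms(4,5) by simp
        then show ?thesis using assms(7) by simp
      qed
      also have "\<dots> \<le> real H / real h" using assms(11) unfolding H_def d_def .
      also have "\<dots> \<le> real H / real ?k"
        using Suc.prems by (simp add: frac_le)
      finally show False by simp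
    qed
  qed
  have S: "{h'. h' \<le> h \<and> (\<exists>i\<in>opened h'. xstar \<in> P h' i)} = {..h}"
    using main by auto
  show ?thesis unfolding bot_depth_def S by (intro Max_eqI) auto
qed

end
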